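(* Let $\Omega$ be a measurable space with reference measure $\mathrm{d}\mathbf{y}$, let $\Theta$ be a parameter set, and for each $\bm{\theta}\in\Theta$ let $f_{\bm{\theta}}(\cdot\mid\cdot):\Omega\times\Omega\to\mathbb{R}$ be such that $0<\int_\Omega\exp\{f_{\bm{\theta}}(\mathbf{y}\mid\mathbf{u})\}\,\mathrm{d}\mathbf{y}<\infty$ for all $\mathbf{u}\in\Omega$. Given a fixed initial point $\mathbf{y}_0$ and observations $\mathbf{y}_1,\ldots,\mathbf{y}_n\in\Omega$, let $$\mathcal{L}(\bm{\theta})=\sum_{t=1}^n\left[f_{\bm{\theta}}(\mathbf{y}_t\mid\mathbf{y}_{t-1})-\log\int_\Omega\exp\{f_{\bm{\theta}}(\mathbf{y}\mid\mathbf{y}_{t-1})\}\,\mathrm{d}\mathbf{y}\right].$$ Let $\mathcal{F}$ be a set of functions $\Omega\to\mathbb{R}$ containing, for every $\bm{\theta}\in\Theta$, the function $\chi_{\bm{\theta}}(\mathbf{u})=-\log\int_\Omega\exp\{f_{\bm{\theta}}(\mathbf{y}\mid\mathbf{u})\}\,\mathrm{d}\mathbf{y}$. For $\bm{\theta}\in\Theta$ and $\chi\in\mathcal{F}$ define $$\mathcal{M}_\chi(\bm{\theta},\chi)=\sum_{t=1}^n\{f_{\bm{\theta}}(\mathbf{y}_t\mid\mathbf{y}_{t-1})+\chi(\mathbf{y}_{t-1})\}-\int_\Omega\sum_{t=1}^n\exp\{f_{\bm{\theta}}(\mathbf{y}\mid\mathbf{y}_{t-1})+\chi(\mathbf{y}_{t-1})\}\,\mathrm{d}\mathbf{y}.$$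 Then the set of points $\bm{\theta}^\star\in\operatorname{argmax}_{\bm{\theta}\in\Theta}\mathcal{L}(\bm{\theta})$ coincides with the set of points $\tilde{\bm{\theta}}$ such that $(\tilde{\bm{\theta}},\chi)\in\operatorname{argmax}_{\bm{\theta}\in\Theta,\chi\in\mathcal{F}}\mathcal{M}_\chi(\bm{\theta},\chi)$ for some $\chi\in\mathcal{F}$.
   Context: $\mathcal{L}$ is the log-likelihood of a Markov chain with unnormalised transition density $\propto\exp\{f_{\bm{\theta}}(\mathbf{y}_t\mid\mathbf{y}_{t-1})\}$. *)

theory Defs
  imports "HOL-Analysis.Analysis"
begin

text \<open>Omega is the carrier of the reference measure M (the measure dy).
  f th y u stands for f_theta(y | u).  ys 0 is the fixed initial point y_0,
  ys 1, ..., ys n are the observations.\<close>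

definition norm_const :: "'a measure \<Rightarrow> ('p \<Rightarrow> 'a \<Rightarrow> 'a \<Rightarrow> real) \<Rightarrow> 'p \<Rightarrow> 'a \<Rightarrow> real" where
  "norm_const M f th u = enn2real (\<integral>\<^sup>+ y. ennreal (exp (f th y u)) \<partial>M)"

definition loglik :: "'a measure \<Rightarrow> ('p \<Rightarrow> 'a \<Rightarrow> 'a \<Rightarrow> real) \<Rightarrow> (nat \<Rightarrow> 'a) \<Rightarrow> nat \<Rightarrow> 'p \<Rightarrow> real" where
  "loglik M f ys n th =
     (\<Sum>t\<in>{1..n}. f th (ys t) (ys (t - 1)) - ln (norm_const M f th (ys (t - 1))))"

definition chi_of :: "'a measure \<Rightarrow> ('p \<Rightarrow> 'a \<Rightarrow> 'a \<Rightarrow> real) \<Rightarrow> 'p \<Rightarrow> 'a \<Rightarrow> real" where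
  "chi_of M f th u = - ln (norm_const M f th u)"

definition M_chi :: "'a measure \<Rightarrow> ('p \<Rightarrow> 'a \<Rightarrow> 'a \<Rightarrow> real) \<Rightarrow> (nat \<Rightarrow> 'a) \<Rightarrow> nat \<Rightarrow> 'p \<Rightarrow> ('a \<Rightarrow> real) \<Rightarrow> real" where
  "M_chi M f ys n th chi =
     (\<Sum>t\<in>{1..n}. f th (ys t) (ys (t - 1)) + chi (ys (t - 1)))
     - (\<integral>y. (\<Sum>t\<in>{1..n}. exp (f th y (ys (t - 1)) + chi (ys (t - 1)))) \<partial>M)"

end

theory Submission
  imports Defs
begin

lemma key_ineq:
  fixes c Z :: real assumes "Z > 0"
  shows "c - exp c * Z \<le> - ln Z - 1"
proof -
  have "exp c * Z = exp (c + ln Z)" using assms by (simp add: exp_add)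
  moreover have "1 + (c + ln Z) \<le> exp (c + ln Z)" by (rule exp_ge_add_one_self)
  ultimately show ?thesis by linarith
qed

theorem corollary1:
  fixes M :: "'a measure" and Theta :: "'p set" and f :: "'p \<Rightarrow> 'a \<Rightarrow> 'a \<Rightarrow> real"
    and ys :: "nat \<Rightarrow> 'a" and n :: nat and F :: "('a \<Rightarrow> real) set"
  assumes meas: "\<And>th u. th \<in> Theta \<Longrightarrow> u \<in> space M \<Longrightarrow> (\<lambda>y. f th y u) \<in> borel_measurable M"
    and pos: "\<And>th u. th \<in> Theta \<Longrightarrow> u \<in> space M \<Longrightarrow> 0 < (\<integral>\<^sup>+ y. ennreal (exp (f th y u)) \<partial>M)"
    and fin: "\<And>th u. th \<in> Theta \<Longrightarrow> u \<in> space M \<Longrightarrow> (\<integral>\<^sup>+ y. ennreal (exp (f th y u)) \<partial>M) < \<infinity>"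
    and obs: "\<And>t. t \<le> n \<Longrightarrow> ys t \<in> space M"
    and F: "\<And>th. th \<in> Theta \<Longrightarrow> chi_of M f th \<in> F"
  shows "{th \<in> Theta. \<forall>th'\<in>Theta. loglik M f ys n th' \<le> loglik M f ys n th}
       = {th. \<exists>chi\<in>F. th \<in> Theta \<and>
               (\<forall>th'\<in>Theta. \<forall>chi'\<in>F. M_chi M f ys n th' chi' \<le> M_chi M f ys n th chi)}"
proof -
  have Zpos: "norm_const M f th u > 0" if "th \<in> Theta" "u \<in> space M" for th u
    using pos[OF that] fin[OF that] unfolding norm_const_def
    by (simp add: enn2real_positive_iff)
  have intg: "integrable M (\<lambda>y. exp (f th y u))" if "th \<in> Theta" "u \<in> space M" for th u
    using meas[OF that] fin[OF that] by (intro integrableI_bounded) auto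
  have inteq: "(\<integral>y. exp (f th y u) \<partial>M) = norm_const M f th u" if "th \<in> Theta" "u \<in> space M" for th u
    unfolding norm_const_def using meas[OF that]
    by (subst integral_eq_nn_integral) auto
  have Mform: "M_chi M f ys n th chi =
      (\<Sum>t\<in>{1..n}. f th (ys t) (ys (t - 1)) + chi (ys (t - 1))
         - exp (chi (ys (t - 1))) * norm_const M f th (ys (t - 1)))"
    if th: "th \<in> Theta" for th chi
  proof -
    have u: "ys (t - 1) \<in> space M" if "t \<in> {1..n}" for t using obs that by auto
    have e: "exp (f th y (ys (t - 1)) + chi (ys (t - 1))) = exp (chi (ys (t - 1))) * exp (f th y (ys (t - 1)))" for y t
      by (simp add: exp_add)
    have "(\<integral>y. (\<Sum>t\<in>{1..n}. exp (f th y (ys (t - 1)) + chi (ys (t - 1)))) \<partial>M)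
        = (\<Sum>t\<in>{1..n}. \<integral>y. exp (f th y (ys (t - 1)) + chi (ys (t - 1))) \<partial>M)"
      unfolding e using intg[OF th u]
      by (intro Bochner_Integration.integral_sum[where ?f="\<lambda>t y. exp (chi (ys (t - 1))) * exp (f th y (ys (t - 1)))"] integrable_mult_right) auto
    also have "\<dots> = (\<Sum>t\<in>{1..n}. exp (chi (ys (t - 1))) * norm_const M f th (ys (t - 1)))"
      unfolding e using inteq[OF th u] by (intro sum.cong) auto
    finally show ?thesis unfolding M_chi_def by (simp add: sum.distrib sum_subtractf)
  qed
  have ub: "M_chi M f ys n th chi \<le> loglik M f ys n th - n" if th: "th \<in> Theta" for th chi
  proof -
    have "M_chi M f ys n th chi \<le> (\<Sum>t\<in>{1..n}. f th (ys t) (ys (t - 1)) - ln (norm_const M f th (ys (t - 1))) - 1)"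
      unfolding Mform[OF th]
    proof (rule sum_mono)
      fix t assume "t \<in> {1..n}"
      then have "norm_const M f th (ys (t - 1)) > 0" using Zpos[OF th] obs by auto
      from key_ineq[OF this, of "chi (ys (t - 1))"]
      show "f th (ys t) (ys (t - 1)) + chi (ys (t - 1)) - exp (chi (ys (t - 1))) * norm_const M f th (ys (t - 1))
          \<le> f th (ys t) (ys (t - 1)) - ln (norm_const M f th (ys (t - 1))) - 1" by linarith
    qed
    also have "\<dots> = loglik M f ys n th - n" unfolding loglik_def by (simp add: sum_subtractf)
    finally show ?thesis .
  qed
  have eq: "M_chi M f ys n th (chi_of M f th) = loglik M f ys n th - n" if th: "th \<in> Theta" for th
  proof -
    have "M_chi M f ys n th (chi_of M f th) = (\<Sum>t\<in>{1..n}. f th (ys t) (ys (t - 1)) - ln (norm_const M f th (ys (t - 1))) - 1)"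
      unfolding Mform[OF th]
    proof (rule sum.cong)
      fix t assume "t \<in> {1..n}"
      then have "norm_const M f th (ys (t - 1)) > 0" using Zpos[OF th] obs by auto
      then show "f th (ys t) (ys (t - 1)) + chi_of M f th (ys (t - 1)) - exp (chi_of M f th (ys (t - 1))) * norm_const M f th (ys (t - 1))
          = f th (ys t) (ys (t - 1)) - ln (norm_const M f th (ys (t - 1))) - 1"
        unfolding chi_of_def by (simp add: exp_minus field_simps)
    qed simp
    also have "\<dots> = loglik M f ys n th - n" unfolding loglik_def by (simp add: sum_subtractf)
    finally show ?thesis .
  qed
  show ?thesis
  proof (intro set_eqI iffI)
    fix th assume "th \<in> {th \<in> Theta. \<forall>th'\<in>Theta. loglik M f ys n th' \<le> loglik M f ys n th}"
    then have th: "th \<in> Theta" and mx: "\<And>th'. th' \<in> Theta \<Longrightarrow> loglik M f ys n th' \<le> loglik M f ys n th" by auto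
    have "\<forall>th'\<in>Theta. \<forall>chi'\<in>F. M_chi M f ys n th' chi' \<le> M_chi M f ys n th (chi_of M f th)"
      using ub mx eq[OF th] by (smt (verit))
    then show "th \<in> {th. \<exists>chi\<in>F. th \<in> Theta \<and>
               (\<forall>th'\<in>Theta. \<forall>chi'\<in>F. M_chi M f ys n th' chi' \<le> M_chi M f ys n th chi)}"
      using F[OF th] th by blast
  next
    fix th assume "th \<in> {th. \<exists>chi\<in>F. th \<in> Theta \<and>
               (\<forall>th'\<in>Theta. \<forall>chi'\<in>F. M_chi M f ys n th' chi' \<le> M_chi M f ys n th chi)}"
    then obtain chi where th: "th \<in> Theta" and mx: "\<And>th' chi'. th' \<in> Theta \<Longrightarrow> chi' \<in> F \<Longrightarrow> M_chi M f ys n th' chi' \<le> M_chi M f ys n th chi"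
      by auto
    have "loglik M f ys n th' \<le> loglik M f ys n th" if "th' \<in> Theta" for th'
      using mx[OF that F[OF that]] eq[OF that] ub[OF th, of chi] by linarith
    then show "th \<in> {th \<in> Theta. \<forall>th'\<in>Theta. loglik M f ys n th' \<le> loglik M f ys n th}"
      using th by auto
  qed
qed

end
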